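(* Let $x_1,\dots,x_n\in\mathbb{R}^d$ with $\|x_i\|=1$ for all $i$ and $x_i\not\parallel x_j$ for all $i\ne j$. Then $\lambda_0:=\lambda_{\min}(G^\infty)>0$, where $G^\infty=\mathbb{E}_{w\sim N(0,I_d)}[\sigma(Xw)\sigma(Xw)^T]\in\mathbb{R}^{n\times n}$.
   Context: $X\in\mathbb{R}^{n\times d}$ has rows $x_i^T$; $\sigma(s)=\max\{0,s\}$ applied entrywise. $x_i\not\parallel x_j$ means $x_i$ is not a scalar multiple of $x_j$. *)

theory Defs
  imports "HOL-Probability.Probability" "Jordan_Normal_Form.Char_Poly"
begin

definition relu :: "real \<Rightarrow> real" where
  "relu s = max 0 s"

definition std_gaussian :: "(real ^ 'd) measure" where
  "std_gaussian = density lborel (\<lambda>w. ennreal (\<Prod>i\<in>UNIV. std_normal_density (w $ i)))"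

definition G_inf :: "nat \<Rightarrow> (nat \<Rightarrow> real ^ 'd) \<Rightarrow> real mat" where
  "G_inf n x = mat n n (\<lambda>(i, j).
      integral\<^sup>L std_gaussian (\<lambda>w. relu (x i \<bullet> w) * relu (x j \<bullet> w)))"

text \<open>Smallest eigenvalue of a (real, square) matrix whose eigenvalues are real.\<close>
definition lambda_min :: "real mat \<Rightarrow> real" where
  "lambda_min A = Min {k. eigenvalue A k}"

end

theory Submission
  imports Defs "HOL-Computational_Algebra.Fundamental_Theorem_Algebra"
begin

lemma mulvec_sum: "A \<in> carrier_mat n n \<Longrightarrow> v \<in> carrier_vec n \<Longrightarrow> i < n \<Longrightarrow>
  (A *\<^sub>v v) $ i = (\<Sum>j<n. A $$ (i,j) * v $ j)"
  by (simp add: scalar_prod_def row_def lessThan_atLeast0)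

lemma vec_nz: "v \<in> carrier_vec n \<Longrightarrow> v \<noteq> 0\<^sub>v n \<Longrightarrow> \<exists>i<n. v $ i \<noteq> 0"
  by (metis carrier_vecD eq_vecI index_zero_vec(1) index_zero_vec(2))

lemma real_eig_pos:
  fixes G :: "real mat"
  assumes G: "G \<in> carrier_mat n n"
    and pd: "\<And>v. v \<in> carrier_vec n \<Longrightarrow> v \<noteq> 0\<^sub>v n \<Longrightarrow> (\<Sum>i<n. \<Sum>j<n. v$i * v$j * G$$(i,j)) > 0"
    and ev: "eigenvalue G k"
  shows "k > 0"
proof -
  from ev obtain v where v: "eigenvector G v k" unfolding eigenvalue_def by auto
  have vc: "v \<in> carrier_vec n" and vnz: "v \<noteq> 0\<^sub>v n" and eq: "G *\<^sub>v v = k \<cdot>\<^sub>v v"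
    using v G unfolding eigenvector_def by auto
  have comp: "(\<Sum>j<n. G $$ (i,j) * v $ j) = k * v $ i" if "i < n" for i
    using arg_cong[OF eq, of "\<lambda>u. u $ i"] mulvec_sum[OF G vc that] that vc by auto
  have "(\<Sum>i<n. \<Sum>j<n. v$i * v$j * G$$(i,j)) = (\<Sum>i<n. v$i * (\<Sum>j<n. G $$ (i,j) * v $ j))"
    by (simp add: sum_distrib_left mult.assoc mult.commute mult.left_commute)
  also have "\<dots> = (\<Sum>i<n. v$i * (k * v$i))"
    by (rule sum.cong[OF refl]) (simp add: comp)
  also have "\<dots> = k * (\<Sum>i<n. v$i * v$i)"
    by (simp add: sum_distrib_left mult.commute mult.left_commute)
  finally have q: "0 < k * (\<Sum>i<n. v$i * v$i)" using pd[OF vc vnz] by simp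
  obtain i where i: "i < n" "v $ i \<noteq> 0" using vec_nz[OF vc vnz] by auto
  have "0 < (\<Sum>i<n. v$i * v$i)"
    by (rule sum_pos2[of _ i]) (use i in \<open>auto simp: zero_less_mult_iff\<close>)
  with q show ?thesis by (simp add: zero_less_mult_iff)
qed

lemma sym_real_eig_exists:
  fixes G :: "real mat"
  assumes G: "G \<in> carrier_mat n n" and n: "n \<ge> 1"
    and sym: "\<And>i j. i < n \<Longrightarrow> j < n \<Longrightarrow> G$$(i,j) = G$$(j,i)"
  shows "\<exists>k. eigenvalue G k"
proof -
  define Gc where "Gc = map_mat complex_of_real G"
  have Gc: "Gc \<in> carrier_mat n n" using G by (simp add: Gc_def)
  have cp: "char_poly Gc = map_poly of_real (char_poly G)"
    unfolding Gc_def by (rule of_real_hom.char_poly_hom[OF G])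
  have "degree (char_poly Gc) = n" using degree_monic_char_poly[OF Gc] by simp
  hence "\<not> constant (poly (char_poly Gc))" using n by (simp add: constant_degree)
  then obtain z where z: "poly (char_poly Gc) z = 0" using fundamental_theorem_of_algebra by blast
  hence "eigenvalue Gc z" using eigenvalue_root_char_poly[OF Gc] by simp
  then obtain v where v: "eigenvector Gc v z" unfolding eigenvalue_def by auto
  have vc: "v \<in> carrier_vec n" and vnz: "v \<noteq> 0\<^sub>v n" and eq: "Gc *\<^sub>v v = z \<cdot>\<^sub>v v"
    using v Gc unfolding eigenvector_def by auto
  have comp: "(\<Sum>j<n. Gc $$ (i,j) * v $ j) = z * v $ i" if "i < n" for i
    using arg_cong[OF eq, of "\<lambda>u. u $ i"] mulvec_sum[OF Gc vc that] that vc by auto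
  define S where "S = (\<Sum>i<n. \<Sum>j<n. cnj (v$i) * v$j * of_real (G$$(i,j)))"
  have "S = (\<Sum>i<n. cnj (v$i) * (\<Sum>j<n. Gc $$ (i,j) * v $ j))"
    unfolding S_def Gc_def using G
    by (auto simp: sum_distrib_left mult.assoc mult.commute mult.left_commute intro!: sum.cong)
  also have "\<dots> = (\<Sum>i<n. cnj (v$i) * (z * v$i))"
    by (rule sum.cong[OF refl]) (simp add: comp)
  also have "\<dots> = z * (\<Sum>i<n. cnj (v$i) * v$i)"
    by (simp add: sum_distrib_left mult.commute mult.left_commute)
  finally have S1: "S = z * (\<Sum>i<n. cnj (v$i) * v$i)" .
  have "cnj S = (\<Sum>i<n. \<Sum>j<n. v$i * cnj (v$j) * of_real (G$$(i,j)))"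
    unfolding S_def by (simp add: cnj_sum)
  also have "\<dots> = (\<Sum>j<n. \<Sum>i<n. v$i * cnj (v$j) * of_real (G$$(i,j)))"
    by (rule sum.swap)
  also have "\<dots> = S" unfolding S_def using sym
    by (auto intro!: sum.cong simp: mult.commute)
  finally have S2: "cnj S = S" .
  define T where "T = (\<Sum>i<n. cnj (v$i) * v$i)"
  have T: "T = of_real (\<Sum>i<n. (Re (v$i))^2 + (Im (v$i))^2)"
    unfolding T_def by (simp add: complex_mult_cnj mult.commute)
  obtain i where i: "i < n" "v $ i \<noteq> 0" using vec_nz[OF vc vnz] by auto
  have Tpos: "0 < (\<Sum>i<n. (Re (v$i))^2 + (Im (v$i))^2)"
    by (rule sum_pos2[of _ i]) (use i in \<open>auto simp: complex_eq_iff sum_power2_gt_zero_iff\<close>)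
  have "cnj z * T = z * T" using S1 S2 T unfolding T_def[symmetric] by (metis complex_cnj_mult complex_cnj_complex_of_real)
  moreover have "T \<noteq> 0" using Tpos unfolding T by (metis less_irrefl of_real_eq_0_iff)
  ultimately have "cnj z = z" by simp
  hence zr: "z = of_real (Re z)" using Reals_cnj_iff complex_is_Real_iff by (metis Reals_cases Re_complex_of_real)
  have "poly (char_poly G) (Re z) = 0"
    using z unfolding cp by (subst (asm) zr) (simp del: of_real_hom.poly_map_poly add: of_real_hom.poly_map_poly)
  thus ?thesis using eigenvalue_root_char_poly[OF G] by blast
qed


definition gdens :: "real ^ 'd \<Rightarrow> real" where
  "gdens w = (\<Prod>i\<in>UNIV. std_normal_density (w $ i))"

lemma gdens_pos: "gdens w > 0"
  unfolding gdens_def by (intro prod_pos) (simp add: normal_density_pos)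

lemma gdens_meas[measurable]: "gdens \<in> borel_measurable borel"
  unfolding gdens_def by measurable

lemma std_gaussian_eq: "std_gaussian = density lborel (\<lambda>w. ennreal (gdens w))"
  unfolding std_gaussian_def gdens_def ..

lemma Basis_cart_real: "(Basis :: (real^'d) set) = range (\<lambda>i. axis i 1)"
  unfolding Basis_vec_def by auto

lemma nn_moment_finite:
  fixes k :: "'d::finite"
  shows "(\<integral>\<^sup>+w. ennreal (gdens w * (w $ k)^2) \<partial>(lborel :: (real^'d) measure)) < \<infinity>"
proof -
  define f :: "real^'d \<Rightarrow> real \<Rightarrow> ennreal" where
    "f b t = ennreal (std_normal_density t * (if b = axis k 1 then t^2 else 1))" for b t
  have inj: "inj (\<lambda>i::'d. axis i (1::real))" by (auto intro!: injI simp: axis_eq_axis)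
  have eq: "ennreal (gdens w * (w $ k)^2) = (\<Prod>b\<in>Basis. f b (w \<bullet> b))" for w :: "real^'d"
  proof -
    have "(\<Prod>b\<in>Basis. f b (w \<bullet> b)) = (\<Prod>i\<in>UNIV. f (axis i 1) (w $ i))"
      unfolding Basis_cart_real by (subst prod.reindex[OF inj]) (simp add: inner_axis)
    also have "\<dots> = ennreal (\<Prod>i\<in>UNIV. std_normal_density (w $ i) * (if axis i (1::real) = axis k 1 then (w$i)^2 else 1))"
      unfolding f_def by (rule prod_ennreal) (simp add: normal_density_nonneg)
    also have "(\<Prod>i\<in>UNIV. std_normal_density (w $ i) * (if axis i (1::real) = axis k 1 then (w$i)^2 else 1))
        = gdens w * (w $ k)^2"
      unfolding gdens_def prod.distrib by (simp add: axis_eq_axis prod.delta)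
    finally show ?thesis by simp
  qed
  have fin: "(\<integral>\<^sup>+t. f b t \<partial>lborel) < \<infinity>" for b
  proof -
    have int: "integrable lborel (\<lambda>t. std_normal_density t * (if b = axis k 1 then t^2 else 1))"
      using integrable_std_normal_moment[of 2] integrable_std_normal_moment[of 0]
      by (cases "b = axis k 1") simp_all
    show ?thesis unfolding f_def
      using int by (simp add: integrable_iff_bounded normal_density_nonneg)
  qed
  have "(\<integral>\<^sup>+w. ennreal (gdens w * (w $ k)^2) \<partial>(lborel :: (real^'d) measure))
      = (\<Prod>b\<in>Basis. (\<integral>\<^sup>+t. f b t \<partial>lborel))"
    unfolding eq by (rule nn_integral_lborel_prod) (auto simp: f_def)
  also have "\<dots> < \<infinity>" using fin ennreal_prod_eq_top[of "\<lambda>b. integral\<^sup>N lborel (f b)" Basis] by (auto simp: less_top) (metis fin less_irrefl)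
  finally show ?thesis .
qed

lemma integrable_moment: "integrable lborel (\<lambda>w::real^'d. gdens w * (w $ k)^2)"
  by (rule integrableI_nonneg)
     (use nn_moment_finite[of k] in \<open>auto intro!: AE_I2 mult_nonneg_nonneg less_imp_le[OF gdens_pos]\<close>)

lemma integrable_norm2: "integrable lborel (\<lambda>w::real^'d. gdens w * (norm w)^2)"
proof -
  have "(\<lambda>w::real^'d. gdens w * (norm w)^2) = (\<lambda>w. \<Sum>k\<in>UNIV. gdens w * (w $ k)^2)"
    unfolding power2_norm_eq_inner inner_vec_def by (simp add: sum_distrib_left power2_eq_square)
  thus ?thesis by (simp only:) (intro Bochner_Integration.integrable_sum integrable_moment)
qed

lemma relu_meas[measurable]: "relu \<in> borel_measurable borel"
  unfolding relu_def[abs_def] by measurable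

lemma relu_cont[continuous_intros]: "continuous_on S f \<Longrightarrow> continuous_on S (\<lambda>x. relu (f x))"
  unfolding relu_def by (intro continuous_intros)

lemma relu_abs: "\<bar>relu s\<bar> \<le> \<bar>s\<bar>"
  unfolding relu_def by auto

lemma integrable_relu_prod:
  fixes a b :: "real^'d"
  assumes "norm a = 1" "norm b = 1"
  shows "integrable std_gaussian (\<lambda>w. relu (a \<bullet> w) * relu (b \<bullet> w))"
proof -
  have "integrable lborel (\<lambda>w. gdens w *\<^sub>R (relu (a \<bullet> w) * relu (b \<bullet> w)))"
  proof (rule Bochner_Integration.integrable_bound[OF integrable_norm2])
    show "(\<lambda>w. gdens w *\<^sub>R (relu (a \<bullet> w) * relu (b \<bullet> w))) \<in> borel_measurable lborel"
      by measurable
    show "AE w in lborel. norm (gdens w *\<^sub>R (relu (a \<bullet> w) * relu (b \<bullet> w))) \<le> norm (gdens w * (norm w)^2)"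
    proof (rule AE_I2)
      fix w :: "real^'d"
      have 1: "\<bar>relu (a \<bullet> w)\<bar> \<le> norm w"
        using relu_abs[of "a \<bullet> w"] Cauchy_Schwarz_ineq2[of a w] assms by simp
      have 2: "\<bar>relu (b \<bullet> w)\<bar> \<le> norm w"
        using relu_abs[of "b \<bullet> w"] Cauchy_Schwarz_ineq2[of b w] assms by simp
      have "\<bar>relu (a \<bullet> w) * relu (b \<bullet> w)\<bar> \<le> (norm w)^2"
        unfolding abs_mult power2_eq_square by (intro mult_mono 1 2) auto
      thus "norm (gdens w *\<^sub>R (relu (a \<bullet> w) * relu (b \<bullet> w))) \<le> norm (gdens w * (norm w)^2)"
        using gdens_pos[of w] by (simp add: abs_mult mult_left_mono)
    qed
  qed
  thus ?thesis unfolding std_gaussian_eq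
    by (subst integrable_density) (use gdens_pos in \<open>auto intro!: AE_I2 less_imp_le\<close>)
qed

lemma cont_AE_zero:
  fixes F :: "'a::euclidean_space \<Rightarrow> real"
  assumes cont: "continuous_on UNIV F" and ae: "AE w in lborel. F w = 0"
  shows "F w = 0"
proof (rule ccontr)
  assume nz: "F w \<noteq> 0"
  define U where "U = {w. F w \<noteq> 0}"
  have "open U" unfolding U_def by (rule open_Collect_neq[OF cont]) (rule continuous_on_const)
  then obtain e where e: "e > 0" "ball w e \<subseteq> U" using nz unfolding U_def open_contains_ball by blast
  have Usets: "U \<in> sets lborel" using \<open>open U\<close> by simp
  have "emeasure lborel U = 0"
    using ae AE_iff_measurable[OF Usets, of "\<lambda>w. F w = 0"] unfolding U_def by simp
  hence "emeasure lborel (ball w e) = 0"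
    using emeasure_mono[OF e(2) Usets] by simp
  moreover have "measure lborel (ball w e) > 0" using content_ball_pos[OF e(1)] by simp
  ultimately show False by (simp add: measure_def)
qed


lemma avoid_hyperplanes:
  fixes a :: "real^'d"
  assumes "finite S" "\<And>u. u \<in> S \<Longrightarrow> u \<noteq> 0 \<and> a \<bullet> u = 0"
  shows "\<exists>p. a \<bullet> p = 0 \<and> (\<forall>u\<in>S. u \<bullet> p \<noteq> 0)"
  using assms
proof (induction S rule: finite_induct)
  case empty
  show ?case by (intro exI[of _ 0]) simp
next
  case (insert u S)
  then obtain p where p: "a \<bullet> p = 0" "\<forall>v\<in>S. v \<bullet> p \<noteq> 0" by auto
  have u: "u \<noteq> 0" "a \<bullet> u = 0" using insert.prems by auto
  show ?case
  proof (cases "u \<bullet> p = 0")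
    case False
    thus ?thesis using p by auto
  next
    case True
    define B where "B = insert 0 ((\<lambda>v. - (v \<bullet> p) / (v \<bullet> u)) ` S)"
    have "finite B" unfolding B_def using insert.hyps by simp
    then obtain s :: real where s: "s \<notin> B" using ex_new_if_finite[OF infinite_UNIV_char_0] by blast
    have s0: "s \<noteq> 0" using s unfolding B_def by auto
    define p' where "p' = p + s *\<^sub>R u"
    have "a \<bullet> p' = 0" unfolding p'_def using p u by (simp add: inner_add_right)
    moreover have "u \<bullet> p' \<noteq> 0" unfolding p'_def using True s0 u by (simp add: inner_add_right)
    moreover have "v \<bullet> p' \<noteq> 0" if v: "v \<in> S" for v
    proof
      assume eq: "v \<bullet> p' = 0"
      hence eq': "v \<bullet> p + s * (v \<bullet> u) = 0" unfolding p'_def by (simp add: inner_add_right)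
      show False
      proof (cases "v \<bullet> u = 0")
        case True thus False using eq' p(2) v by auto
      next
        case False
        hence "s = - (v \<bullet> p) / (v \<bullet> u)" using eq' by (simp add: field_simps)
        thus False using s v unfolding B_def by auto
      qed
    qed
    ultimately show ?thesis by auto
  qed
qed

lemma relu_affine:
  assumes "\<bar>a\<bar> \<ge> d" "d > 0" "\<bar>t\<bar> \<le> d/2" "\<bar>b\<bar> \<le> 1"
  shows "relu (a + t * b) = (if a > 0 then a + t * b else 0)"
proof -
  have "\<bar>t * b\<bar> \<le> d/2"
    unfolding abs_mult using mult_mono[OF assms(3) assms(4)] assms(2) by simp
  thus ?thesis using assms unfolding relu_def by auto
qed

lemma kink:
  fixes x :: "nat \<Rightarrow> real^'d" and c :: "nat \<Rightarrow> real"
  assumes unit: "\<And>i. i < n \<Longrightarrow> norm (x i) = 1"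
    and np: "\<And>i j. i < n \<Longrightarrow> j < n \<Longrightarrow> i \<noteq> j \<Longrightarrow> \<not> (\<exists>c::real. x i = c *\<^sub>R x j)"
    and zero: "\<And>w. (\<Sum>i<n. c i * relu (x i \<bullet> w)) = 0"
    and m: "m < n"
  shows "c m = 0"
proof -
  define J where "J = {..<n} - {m}"
  have finJ: "finite J" unfolding J_def by simp
  define u where "u j = x j - (x j \<bullet> x m) *\<^sub>R x m" for j
  have xmm: "x m \<bullet> x m = 1" using unit[OF m] by (simp add: norm_eq_1)
  have uprop: "u j \<noteq> 0 \<and> x m \<bullet> u j = 0" if "j \<in> J" for j
  proof
    have j: "j < n" "j \<noteq> m" using that unfolding J_def by auto
    show "u j \<noteq> 0"
    proof
      assume "u j = 0"
      hence "x j = (x j \<bullet> x m) *\<^sub>R x m" unfolding u_def by simp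
      thus False using np[OF j(1) m j(2)] by blast
    qed
    show "x m \<bullet> u j = 0" unfolding u_def using xmm by (simp add: inner_diff_right inner_commute)
  qed
  obtain p where p: "x m \<bullet> p = 0" "\<forall>v\<in>u ` J. v \<bullet> p \<noteq> 0"
  proof -
    have "\<exists>p. x m \<bullet> p = 0 \<and> (\<forall>v\<in>u ` J. v \<bullet> p \<noteq> 0)"
      by (rule avoid_hyperplanes) (use finJ uprop in auto)
    thus ?thesis using that by blast
  qed
  have ap: "x j \<bullet> p \<noteq> 0" if "j \<in> J" for j
  proof -
    have "u j \<bullet> p = x j \<bullet> p" unfolding u_def using p(1) by (simp add: inner_diff_left inner_commute[of p])
    thus ?thesis using p(2) that by auto
  qed
  define d where "d = Min (insert 1 ((\<lambda>j. \<bar>x j \<bullet> p\<bar>) ` J))"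
  have dpos: "d > 0" unfolding d_def using finJ ap by (subst Min_gr_iff) auto
  have dle: "d \<le> \<bar>x j \<bullet> p\<bar>" if "j \<in> J" for j
    unfolding d_def using finJ that by (intro Min_le) auto
  have bj: "\<bar>x j \<bullet> x m\<bar> \<le> 1" if "j \<in> J" for j
    using Cauchy_Schwarz_ineq2[of "x j" "x m"] unit[OF m] unit[of j] that unfolding J_def by auto
  define L where "L t = (\<Sum>j\<in>J. c j * (if x j \<bullet> p > 0 then x j \<bullet> p + t * (x j \<bullet> x m) else 0))" for t
  have F: "(\<Sum>i<n. c i * relu (x i \<bullet> (p + t *\<^sub>R x m))) = c m * relu t + L t"
    if t: "\<bar>t\<bar> \<le> d/2" for t
  proof -
    have "(\<Sum>i<n. c i * relu (x i \<bullet> (p + t *\<^sub>R x m))) =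
        c m * relu (x m \<bullet> (p + t *\<^sub>R x m)) + (\<Sum>i\<in>J. c i * relu (x i \<bullet> (p + t *\<^sub>R x m)))"
      unfolding J_def using m by (subst sum.remove[of _ m]) auto
    also have "x m \<bullet> (p + t *\<^sub>R x m) = t" using p(1) xmm by (simp add: inner_add_right)
    also have "(\<Sum>i\<in>J. c i * relu (x i \<bullet> (p + t *\<^sub>R x m))) = L t"
      unfolding L_def
    proof (rule sum.cong[OF refl])
      fix j assume j: "j \<in> J"
      have "relu (x j \<bullet> (p + t *\<^sub>R x m)) = relu (x j \<bullet> p + t * (x j \<bullet> x m))"
        by (simp add: inner_add_right)
      also have "\<dots> = (if x j \<bullet> p > 0 then x j \<bullet> p + t * (x j \<bullet> x m) else 0)"
        by (rule relu_affine[OF dle[OF j] dpos t bj[OF j]])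
      finally show "c j * relu (x j \<bullet> (p + t *\<^sub>R x m)) = c j * (if x j \<bullet> p > 0 then x j \<bullet> p + t * (x j \<bullet> x m) else 0)"
        by simp
    qed
    finally show ?thesis .
  qed
  have Laff: "L h + L (-h) = 2 * L 0" for h
    unfolding L_def by (simp add: sum.distrib[symmetric] sum_distrib_left)
       (rule sum.cong, auto simp: algebra_simps)
  define h where "h = d/2"
  have h: "h > 0" "\<bar>h\<bar> \<le> d/2" "\<bar>-h\<bar> \<le> d/2" "\<bar>0::real\<bar> \<le> d/2" using dpos unfolding h_def by auto
  have "c m * relu h + L h = 0" using F[OF h(2)] zero by simp
  moreover have "c m * relu (-h) + L (-h) = 0" using F[OF h(3)] zero by simp
  moreover have "c m * relu 0 + L 0 = 0" using F[OF h(4)] zero by simp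
  ultimately have "c m * h = 0" using Laff[of h] h(1) unfolding relu_def by auto
  thus ?thesis using h(1) by simp
qed


lemma lambda_min_pos:
  fixes G :: "real mat"
  assumes G: "G \<in> carrier_mat n n" and n: "n \<ge> 1"
    and sym: "\<And>i j. i < n \<Longrightarrow> j < n \<Longrightarrow> G$$(i,j) = G$$(j,i)"
    and pd: "\<And>v. v \<in> carrier_vec n \<Longrightarrow> v \<noteq> 0\<^sub>v n \<Longrightarrow> (\<Sum>i<n. \<Sum>j<n. v$i * v$j * G$$(i,j)) > 0"
  shows "lambda_min G > 0"
proof -
  have eq: "{k. eigenvalue G k} = {k. poly (char_poly G) k = 0}"
    using eigenvalue_root_char_poly[OF G] by auto
  have "char_poly G \<noteq> 0" using degree_monic_char_poly[OF G] by auto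
  hence fin: "finite {k. eigenvalue G k}" unfolding eq by (rule poly_roots_finite)
  have ne: "{k. eigenvalue G k} \<noteq> {}" using sym_real_eig_exists[OF G n sym] by auto
  show ?thesis unfolding lambda_min_def using fin ne real_eig_pos[OF G pd]
    by (subst Min_gr_iff) auto
qed

theorem lemma5:
  fixes n :: nat and x :: "nat \<Rightarrow> real ^ 'd"
  assumes "n \<ge> 1"
    and "\<And>i. i < n \<Longrightarrow> norm (x i) = 1"
    and "\<And>i j. i < n \<Longrightarrow> j < n \<Longrightarrow> i \<noteq> j \<Longrightarrow> \<not> (\<exists>c::real. x i = c *\<^sub>R x j)"
  shows "lambda_min (G_inf n x) > 0"
proof (rule lambda_min_pos[OF _ assms(1)])
  let ?G = "G_inf n x"
  define r where "r i w = relu (x i \<bullet> w)" for i and w :: "real^'d"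
  have Gij: "?G $$ (i,j) = integral\<^sup>L std_gaussian (\<lambda>w. r i w * r j w)" if "i < n" "j < n" for i j
    using that unfolding G_inf_def r_def by simp
  have intr: "integrable std_gaussian (\<lambda>w. r i w * r j w)" if "i < n" "j < n" for i j
    unfolding r_def by (rule integrable_relu_prod) (use assms(2) that in auto)
  show "?G \<in> carrier_mat n n" unfolding G_inf_def by simp
  show "?G $$ (i,j) = ?G $$ (j,i)" if "i < n" "j < n" for i j
    using that by (simp add: Gij mult.commute)
  fix v :: "real vec"
  assume vc: "v \<in> carrier_vec n" and vnz: "v \<noteq> 0\<^sub>v n"
  define F where "F w = (\<Sum>i<n. v$i * r i w)" for w
  have F2: "(F w)^2 = (\<Sum>i<n. \<Sum>j<n. v$i * v$j * (r i w * r j w))" for w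
    unfolding F_def power2_eq_square sum_product by (simp add: mult_ac)
  have intF: "integrable std_gaussian (\<lambda>w. (F w)^2)"
    unfolding F2 by (intro Bochner_Integration.integrable_sum integrable_mult_right intr) auto
  have Q: "(\<Sum>i<n. \<Sum>j<n. v$i * v$j * ?G$$(i,j)) = integral\<^sup>L std_gaussian (\<lambda>w. (F w)^2)"
  proof -
    have "(\<Sum>i<n. \<Sum>j<n. v$i * v$j * ?G$$(i,j)) =
        (\<Sum>i<n. \<Sum>j<n. integral\<^sup>L std_gaussian (\<lambda>w. v$i * v$j * (r i w * r j w)))"
      by (intro sum.cong refl) (simp add: Gij)
    also have "\<dots> = integral\<^sup>L std_gaussian (\<lambda>w. (F w)^2)"
    proof -
      have inner: "(\<Sum>j<n. integral\<^sup>L std_gaussian (\<lambda>w. v$i * v$j * (r i w * r j w)))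
          = integral\<^sup>L std_gaussian (\<lambda>w. \<Sum>j<n. v$i * v$j * (r i w * r j w))" if "i < n" for i
        by (rule Bochner_Integration.integral_sum[symmetric]) (intro integrable_mult_right intr that, simp)
      have "(\<Sum>i<n. \<Sum>j<n. integral\<^sup>L std_gaussian (\<lambda>w. v$i * v$j * (r i w * r j w)))
          = (\<Sum>i<n. integral\<^sup>L std_gaussian (\<lambda>w. \<Sum>j<n. v$i * v$j * (r i w * r j w)))"
        by (rule sum.cong[OF refl]) (rule inner, simp)
      also have "\<dots> = integral\<^sup>L std_gaussian (\<lambda>w. \<Sum>i<n. \<Sum>j<n. v$i * v$j * (r i w * r j w))"
        by (rule Bochner_Integration.integral_sum[symmetric])
           (intro Bochner_Integration.integrable_sum integrable_mult_right intr, simp_all)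
      finally show ?thesis unfolding F2 .
    qed
    finally show ?thesis .
  qed
  have nn: "integral\<^sup>L std_gaussian (\<lambda>w. (F w)^2) \<ge> 0" by (rule integral_nonneg_AE) auto
  show "(\<Sum>i<n. \<Sum>j<n. v$i * v$j * ?G$$(i,j)) > 0"
  proof (rule ccontr)
    assume "\<not> ?thesis"
    hence z: "integral\<^sup>L std_gaussian (\<lambda>w. (F w)^2) = 0" using Q nn by simp
    hence "AE w in std_gaussian. (F w)^2 = 0"
      using integral_nonneg_eq_0_iff_AE[OF intF] by auto
    hence "AE w in lborel. 0 < ennreal (gdens w) \<longrightarrow> (F w)^2 = 0"
      unfolding std_gaussian_eq by (subst (asm) AE_density) auto
    hence ae: "AE w in lborel. F w = 0" by eventually_elim (use gdens_pos in auto)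
    have cont: "continuous_on UNIV F" unfolding F_def r_def by (intro continuous_intros)
    have Fz: "\<And>w. (\<Sum>i<n. v$i * relu (x i \<bullet> w)) = 0"
      using cont_AE_zero[OF cont ae] unfolding F_def r_def by simp
    have "v $ m = 0" if "m < n" for m
      by (rule kink[of n x "\<lambda>i. v $ i", OF assms(2) assms(3) Fz that]) auto
    thus False using vec_nz[OF vc vnz] by auto
  qed
qed

end
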